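(* In any execution of the PermitBFT protocol, if a block is committed, then it is promised.
   Context: PermitBFT setting: $n$ nodes $v_0,\dots,v_{n-1}$, exactly $f<n/3$ byzantine (cannot forge honest signatures), the rest honest. A position is a finite set of blocks. A permit is a signed tuple $(r,p)$ with round $r$ and position $p$. A proof for $(r,p)$ is a set of $2f+1$ permits for $(r,p)$ from distinct nodes. A block is a tuple (proof, transactions) signed by the creator $v_{r\bmod n}$ of the proof's round $r$; its parents are the blocks of the proof's position $p$ (so a block can only be created from $2f+1$ permits of one round for one position). A block is committed if it has at least one child block. A block $b$ is promised (by the latest round) if in some round up to and including the latest round, at least $f+1$ honest nodes issued a permit for one and the same position containing $b$. *)

theory Defs
  imports Main "HOL-Library.FSet"
begin

text \<open>Nodes are v_0..v_{n-1}, identified with naturals below n.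
A permit is a signed tuple (r,p); we represent it as (signer, round, position).\<close>

datatype 'tx block =
  Block (bproof: "(nat \<times> nat \<times> 'tx block fset) fset") (btxs: 'tx) (bsigner: nat)

type_synonym 'tx position = "'tx block fset"
type_synonym 'tx permit = "nat \<times> nat \<times> 'tx position"

definition is_proof :: "nat \<Rightarrow> nat \<Rightarrow> 'tx permit set \<Rightarrow> nat \<Rightarrow> 'tx position \<Rightarrow> bool" where
  "is_proof n f P r p \<longleftrightarrow>
     (\<forall>x\<in>P. fst x < n \<and> snd x = (r, p)) \<and> inj_on fst P \<and> card P = 2 * f + 1"

definition valid_block :: "nat \<Rightarrow> nat \<Rightarrow> 'tx block \<Rightarrow> bool" where
  "valid_block n f b \<longleftrightarrow>
     (\<exists>r p. is_proof n f (fset (bproof b)) r p \<and> bsigner b = r mod n)"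

text \<open>Round and position of the proof of a block (well defined for valid blocks).\<close>
definition block_round :: "'tx block \<Rightarrow> nat" where
  "block_round b = fst (snd (SOME x. x \<in> fset (bproof b)))"

definition parents :: "'tx block \<Rightarrow> 'tx position" where
  "parents b = snd (snd (SOME x. x \<in> fset (bproof b)))"

text \<open>An execution (snapshot up to latest round R): byz is the set of exactly f
byzantine nodes, f < n/3; issued is the set of permits issued by honest nodes,
all in rounds up to R; blocks is the set of blocks created so far, all valid.
Honest signatures cannot be forged: every permit by an honest node appearing in
a proof of a block was actually issued by that node.\<close>
definition execution ::
  "nat \<Rightarrow> nat \<Rightarrow> nat set \<Rightarrow> nat \<Rightarrow> 'tx permit set \<Rightarrow> 'tx block set \<Rightarrow> bool" where
  "execution n f byz R issued blocks \<longleftrightarrow>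
     3 * f < n \<and> byz \<subseteq> {..<n} \<and> card byz = f \<and>
     (\<forall>x\<in>issued. fst x < n \<and> fst x \<notin> byz \<and> fst (snd x) \<le> R) \<and>
     (\<forall>c\<in>blocks. valid_block n f c) \<and>
     (\<forall>c\<in>blocks. \<forall>x\<in>fset (bproof c). fst x \<notin> byz \<longrightarrow> x \<in> issued)"

definition committed :: "'tx block set \<Rightarrow> 'tx block \<Rightarrow> bool" where
  "committed blocks b \<longleftrightarrow> (\<exists>c\<in>blocks. b |\<in>| parents c)"

definition promised ::
  "nat \<Rightarrow> nat \<Rightarrow> nat set \<Rightarrow> nat \<Rightarrow> 'tx permit set \<Rightarrow> 'tx block \<Rightarrow> bool" where
  "promised n f byz R issued b \<longleftrightarrow>
     (\<exists>r\<le>R. \<exists>p. b |\<in>| p \<and>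
        f + 1 \<le> card {v. v < n \<and> v \<notin> byz \<and> (v, r, p) \<in> issued})"

end

theory Submission
  imports Defs
begin

theorem lemma1:
  fixes blocks :: "'tx block set" and issued :: "'tx permit set"
  assumes "execution n f byz R issued blocks"
    and "committed blocks b"
  shows "promised n f byz R issued b"
proof -
  note E = assms(1)[unfolded execution_def]
  obtain c where c: "c \<in> blocks" "b |\<in>| parents c" using assms(2) committed_def by blast
  obtain r p where pr: "is_proof n f (fset (bproof c)) r p" using E c(1) valid_block_def by blast
  define P where "P = fset (bproof c)"
  have Pp: "\<forall>x\<in>P. fst x < n \<and> snd x = (r, p)" "inj_on fst P" "card P = 2 * f + 1"
    using pr P_def is_proof_def by blast+
  have fin: "finite P" using P_def by simp
  have ne: "P \<noteq> {}" using Pp(3) by auto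
  have "(SOME x. x \<in> fset (bproof c)) \<in> P" using ne P_def by (metis some_in_eq)
  hence "snd (SOME x. x \<in> fset (bproof c)) = (r, p)" using Pp(1) by blast
  hence "parents c = p" unfolding parents_def by simp
  hence bp: "b |\<in>| p" using c(2) by simp
  define H where "H = fst ` P - byz"
  have cardF: "card (fst ` P) = 2 * f + 1" using Pp(2,3) card_image[OF Pp(2)] by simp
  have finbyz: "finite byz" using E finite_subset by blast
  have sub: "fst ` P \<subseteq> H \<union> byz" unfolding H_def by blast
  have "card (fst ` P) \<le> card (H \<union> byz)"
    by (rule card_mono[OF _ sub]) (simp add: H_def fin finbyz)
  also have "\<dots> \<le> card H + card byz" by (rule card_Un_le)
  finally have "card (fst ` P) \<le> card H + card byz" .
  hence cardH: "f + 1 \<le> card H" using cardF E by simp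
  have Hsub: "H \<subseteq> {v. v < n \<and> v \<notin> byz \<and> (v, r, p) \<in> issued}"
  proof
    fix v assume "v \<in> H"
    then obtain x where x: "x \<in> P" "v = fst x" "v \<notin> byz" unfolding H_def by blast
    have "x = (v, r, p)" using x Pp(1) by (metis prod.collapse)
    moreover have "x \<in> issued" using E c(1) x P_def by blast
    ultimately show "v \<in> {v. v < n \<and> v \<notin> byz \<and> (v, r, p) \<in> issued}" using x Pp(1) by auto
  qed
  have "H \<noteq> {}" using cardH by auto
  then obtain v where "v \<in> H" by blast
  hence "(v, r, p) \<in> issued" using Hsub by blast
  hence rR: "r \<le> R" using E by auto
  have "card H \<le> card {v. v < n \<and> v \<notin> byz \<and> (v, r, p) \<in> issued}"
    by (rule card_mono[OF _ Hsub]) simp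
  thus ?thesis unfolding promised_def using rR bp cardH by (meson le_trans)
qed

end
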